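(* Let $p$ be an odd prime, $i\in\mathbb{N}_0$ and $\gamma\in\hat H_i$. Let $\tilde\gamma$ be the unique $\mathbb{Q}_p$-linear extension of $\gamma$ to $K\wedge_{\mathbb{Q}_p}K\to K$. Then for every $j\in\mathbb{N}_0$ with $j\equiv i\pmod{p-1}$, the restriction of $\tilde\gamma$ to $\mathfrak{p}^j\wedge\mathfrak{p}^j$ lies in $\hat H_j$.
   Context: Let $\theta$ be a primitive $p$-th root of unity, $K=\mathbb{Q}_p(\theta)$, $\mathcal{O}$ its ring of integers, $\mathfrak{p}$ its maximal ideal; $\mathfrak{p}^j$ is the unique ideal of index $p^j$ in $\mathcal{O}$. $P=\langle\theta\rangle$ acts by multiplication on ideals and diagonally on exterior squares $\mathfrak{p}^i\wedge\mathfrak{p}^i$ (over $\mathbb{Z}_p$); $\mathrm{Hom}_P$ denotes $P$-equivariant $\mathbb{Z}_p$-linear maps. $\hat{H}_i=\{\gamma\in\mathrm{Hom}_P(\mathfrak{p}^i\wedge\mathfrak{p}^i,\mathfrak{p}^{2i+1}) \mid \gamma \text{ surjective}\}$. *)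

theory Defs
  imports "HOL-Number_Theory.Number_Theory"
begin

text \<open>
The p-adic integers Z_p are represented as compatible
sequences of residues (the inverse limit of Z/p^n):  a :: nat => int with
0 <= a n < p^n and a (Suc n) mod p^n = a n.
The ring of integers O = Z_p[theta] of K = Q_p(theta) is the free Z_p-module
with basis 1, theta, ..., theta^(p-2); an element is its coordinate function
c :: nat => zp (coordinates at indices >= p-1 are zero).
Multiplication by theta uses theta^(p-1) = -(1 + theta + ... + theta^(p-2)).
\<close>

type_synonym zp = "nat \<Rightarrow> int"
type_synonym cyc = "nat \<Rightarrow> zp"

definition Zp :: "nat \<Rightarrow> zp set" where
  "Zp p = {a. \<forall>n. 0 \<le> a n \<and> a n < int p ^ n \<and> a (Suc n) mod int p ^ n = a n}"

definition zadd :: "nat \<Rightarrow> zp \<Rightarrow> zp \<Rightarrow> zp" where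
  "zadd p a b = (\<lambda>n. (a n + b n) mod int p ^ n)"

definition zmul :: "nat \<Rightarrow> zp \<Rightarrow> zp \<Rightarrow> zp" where
  "zmul p a b = (\<lambda>n. (a n * b n) mod int p ^ n)"

definition zneg :: "nat \<Rightarrow> zp \<Rightarrow> zp" where
  "zneg p a = (\<lambda>n. (- a n) mod int p ^ n)"

definition zzero :: zp where
  "zzero = (\<lambda>n. 0)"

definition zofint :: "nat \<Rightarrow> int \<Rightarrow> zp" where
  "zofint p m = (\<lambda>n. m mod int p ^ n)"

definition Ocar :: "nat \<Rightarrow> cyc set" where
  "Ocar p = {c. (\<forall>k < p - 1. c k \<in> Zp p) \<and> (\<forall>k \<ge> p - 1. c k = zzero)}"

definition Ozero :: cyc where
  "Ozero = (\<lambda>k. zzero)"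

definition Oadd :: "nat \<Rightarrow> cyc \<Rightarrow> cyc \<Rightarrow> cyc" where
  "Oadd p c d = (\<lambda>k. zadd p (c k) (d k))"

definition Oneg :: "nat \<Rightarrow> cyc \<Rightarrow> cyc" where
  "Oneg p c = (\<lambda>k. zneg p (c k))"

definition Osmult :: "nat \<Rightarrow> zp \<Rightarrow> cyc \<Rightarrow> cyc" where
  "Osmult p s c = (\<lambda>k. zmul p s (c k))"

definition Otheta :: "nat \<Rightarrow> cyc \<Rightarrow> cyc" where
  "Otheta p c = (\<lambda>k. if k = 0 then zneg p (c (p - 2))
                     else if k < p - 1 then zadd p (c (k - 1)) (zneg p (c (p - 2)))
                     else zzero)"

text \<open>Multiplication by the uniformiser pi = theta - 1.\<close>
definition Opi :: "nat \<Rightarrow> cyc \<Rightarrow> cyc" where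
  "Opi p c = Oadd p (Otheta p c) (Oneg p c)"

definition Pideal :: "nat \<Rightarrow> nat \<Rightarrow> cyc set" where
  "Pideal p j = (Opi p ^^ j) ` Ocar p"

definition Ospan :: "nat \<Rightarrow> cyc set \<Rightarrow> cyc set" where
  "Ospan p S = {c. \<exists>xs :: (zp \<times> cyc) list.
      set (map fst xs) \<subseteq> Zp p \<and> set (map snd xs) \<subseteq> S \<and>
      c = foldr (\<lambda>(s, x) acc. Oadd p (Osmult p s x) acc) xs Ozero}"

text \<open>
Hhat p i: P-equivariant Z_p-linear maps  p^i /\ p^i -> p^(2i+1) that are surjective,
represented via the universal property of the exterior square as alternating
Z_p-bilinear maps  beta : p^i x p^i -> p^(2i+1)  (only the values on p^i x p^i matter);
equivariance: beta (theta x) (theta y) = theta (beta x y);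
surjectivity: the Z_p-span of the image is all of p^(2i+1).
\<close>
definition Hhat :: "nat \<Rightarrow> nat \<Rightarrow> (cyc \<Rightarrow> cyc \<Rightarrow> cyc) set" where
  "Hhat p i = {\<beta>.
     (\<forall>x\<in>Pideal p i. \<forall>y\<in>Pideal p i. \<beta> x y \<in> Pideal p (2 * i + 1)) \<and>
     (\<forall>x\<in>Pideal p i. \<forall>x'\<in>Pideal p i. \<forall>y\<in>Pideal p i.
        \<beta> (Oadd p x x') y = Oadd p (\<beta> x y) (\<beta> x' y) \<and>
        \<beta> y (Oadd p x x') = Oadd p (\<beta> y x) (\<beta> y x')) \<and>
     (\<forall>s\<in>Zp p. \<forall>x\<in>Pideal p i. \<forall>y\<in>Pideal p i.
        \<beta> (Osmult p s x) y = Osmult p s (\<beta> x y) \<and>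
        \<beta> y (Osmult p s x) = Osmult p s (\<beta> y x)) \<and>
     (\<forall>x\<in>Pideal p i. \<beta> x x = Ozero) \<and>
     (\<forall>x\<in>Pideal p i. \<forall>y\<in>Pideal p i. \<beta> (Otheta p x) (Otheta p y) = Otheta p (\<beta> x y)) \<and>
     Ospan p ((\<lambda>(x, y). \<beta> x y) ` (Pideal p i \<times> Pideal p i)) = Pideal p (2 * i + 1)}"

end

theory Submission
  imports Defs "HOL-Computational_Algebra.Polynomial"
begin


lemma Zp_D: "a \<in> Zp p \<Longrightarrow> 0 \<le> a n \<and> a n < int p ^ n \<and> a (Suc n) mod int p ^ n = a n"
  by (simp add: Zp_def)

lemma Zp_mod_le: assumes "a \<in> Zp p" "n \<le> m" shows "a m mod int p ^ n = a n"
  using assms(2)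
proof (induction m)
  case 0 then show ?case using Zp_D[OF assms(1), of 0] by simp
next
  case (Suc m)
  show ?case
  proof (cases "n = Suc m")
    case True
    then show ?thesis using Zp_D[OF assms(1), of n] by simp
  next
    case False
    then have "n \<le> m" using Suc by simp
    have "int p ^ n dvd int p ^ m" using \<open>n \<le> m\<close> by (simp add: le_imp_power_dvd)
    then have "a (Suc m) mod int p ^ n = (a (Suc m) mod int p ^ m) mod int p ^ n"
      by (simp add: mod_mod_cancel)
    also have "\<dots> = a m mod int p ^ n" using Zp_D[OF assms(1), of m] by simp
    finally show ?thesis using Suc.IH[OF \<open>n \<le> m\<close>] by simp
  qed
qed

lemma Zp_self: "a \<in> Zp p \<Longrightarrow> a n mod int p ^ n = a n"
  using Zp_mod_le by blast

lemma Zp_modI: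
  assumes "p > 0" "\<And>n. a n = f n mod int p ^ n" "\<And>n. f (Suc n) mod int p ^ n = f n mod int p ^ n"
  shows "a \<in> Zp p"
proof -
  have d: "int p ^ n dvd int p ^ Suc n" for n by simp
  have "0 \<le> a n \<and> a n < int p ^ n \<and> a (Suc n) mod int p ^ n = a n" for n
  proof -
    have "a (Suc n) mod int p ^ n = f (Suc n) mod int p ^ n"
      unfolding assms(2)[of "Suc n"] by (rule mod_mod_cancel[OF d])
    then show ?thesis using assms by simp
  qed
  then show ?thesis unfolding Zp_def by blast
qed

lemma zadd_Zp: assumes "p > 0" "a \<in> Zp p" "b \<in> Zp p" shows "zadd p a b \<in> Zp p"
proof (rule Zp_modI[where f="\<lambda>n. a n + b n"])
  fix n
  have "(a (Suc n) + b (Suc n)) mod int p ^ n = (a (Suc n) mod int p ^ n + b (Suc n) mod int p ^ n) mod int p ^ n"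
    by (rule mod_add_eq[symmetric])
  then show "(a (Suc n) + b (Suc n)) mod int p ^ n = (a n + b n) mod int p ^ n"
    using Zp_D[OF assms(2), of n] Zp_D[OF assms(3), of n] by simp
qed (auto simp: zadd_def assms)

lemma zmul_Zp: assumes "p > 0" "a \<in> Zp p" "b \<in> Zp p" shows "zmul p a b \<in> Zp p"
proof (rule Zp_modI[where f="\<lambda>n. a n * b n"])
  fix n
  have "(a (Suc n) * b (Suc n)) mod int p ^ n = (a (Suc n) mod int p ^ n * (b (Suc n) mod int p ^ n)) mod int p ^ n"
    by (rule mod_mult_eq[symmetric])
  then show "(a (Suc n) * b (Suc n)) mod int p ^ n = (a n * b n) mod int p ^ n"
    using Zp_D[OF assms(2), of n] Zp_D[OF assms(3), of n] by simp
qed (auto simp: zmul_def assms)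

lemma zneg_Zp: assumes "p > 0" "a \<in> Zp p" shows "zneg p a \<in> Zp p"
proof (rule Zp_modI[where f="\<lambda>n. - a n"])
  fix n
  have "(- a (Suc n)) mod int p ^ n = (- (a (Suc n) mod int p ^ n)) mod int p ^ n"
    by (rule mod_minus_eq[symmetric])
  then show "(- a (Suc n)) mod int p ^ n = (- a n) mod int p ^ n"
    using Zp_D[OF assms(2), of n] by simp
qed (auto simp: zneg_def assms)

lemma zofint_Zp: assumes "p > 0" shows "zofint p m \<in> Zp p"
  by (rule Zp_modI[where f="\<lambda>n. m", OF assms]) (simp_all add: zofint_def assms)

lemma zzero_Zp: "p > 0 \<Longrightarrow> zzero \<in> Zp p"
  by (simp add: Zp_def zzero_def)

lemma zmul_zadd: "zmul p s (zadd p a b) = zadd p (zmul p s a) (zmul p s b)"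
  by (simp add: zmul_def zadd_def fun_eq_iff mod_simps distrib_left)

lemma zmul_zmul: "zmul p s (zmul p t a) = zmul p (zmul p s t) a"
  by (simp add: zmul_def fun_eq_iff mod_simps mult.assoc)

lemma zmul_comm: "zmul p s t = zmul p t s"
  by (simp add: zmul_def fun_eq_iff mult.commute)

lemma zmul_zneg: "zmul p s (zneg p a) = zneg p (zmul p s a)"
  by (simp add: zmul_def zneg_def fun_eq_iff mod_simps)

lemma zmul_zzero: "zmul p s zzero = zzero"
  by (simp add: zmul_def zzero_def fun_eq_iff)

lemma zneg_zadd: "zneg p (zadd p a b) = zadd p (zneg p a) (zneg p b)"
  by (simp add: zneg_def zadd_def fun_eq_iff mod_simps)

lemma zadd_assoc: "zadd p (zadd p a b) c = zadd p a (zadd p b c)"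
  by (simp add: zadd_def fun_eq_iff mod_simps add.assoc)

lemma zadd_comm: "zadd p a b = zadd p b a"
  by (simp add: zadd_def fun_eq_iff add.commute)

lemma zadd_4: "zadd p (zadd p a b) (zadd p c d) = zadd p (zadd p a c) (zadd p b d)"
  by (simp add: zadd_def fun_eq_iff mod_add_eq) (simp add: ac_simps)

lemma zadd_zzero: "zadd p zzero zzero = zzero" "zneg p zzero = zzero"
  by (simp_all add: zadd_def zneg_def zzero_def fun_eq_iff)

lemma zofint_mult: "zmul p (zofint p a) (zofint p b) = zofint p (a * b)"
  by (simp add: zmul_def zofint_def fun_eq_iff mod_simps)

lemma Osmult_Oadd: "Osmult p s (Oadd p c d) = Oadd p (Osmult p s c) (Osmult p s d)"
  by (simp add: Osmult_def Oadd_def zmul_zadd)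

lemma Osmult_Osmult: "Osmult p s (Osmult p t c) = Osmult p (zmul p s t) c"
  by (simp add: Osmult_def zmul_zmul)

lemma Osmult_comm: "Osmult p s (Osmult p t c) = Osmult p t (Osmult p s c)"
  by (simp add: Osmult_Osmult zmul_comm)

lemma Osmult_Oneg: "Osmult p s (Oneg p c) = Oneg p (Osmult p s c)"
  by (simp add: Osmult_def Oneg_def zmul_zneg)

lemma Osmult_Ozero: "Osmult p s Ozero = Ozero"
  by (simp add: Osmult_def Ozero_def zmul_zzero)

lemma Osmult_Otheta: "Osmult p s (Otheta p c) = Otheta p (Osmult p s c)"
  by (simp add: Osmult_def Otheta_def fun_eq_iff zmul_zneg zmul_zadd zmul_zzero)

lemma Osmult_Opi: "Osmult p s (Opi p c) = Opi p (Osmult p s c)"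
  by (simp add: Opi_def Osmult_Oadd Osmult_Otheta Osmult_Oneg)

lemma Osmult_Opi_pow: "Osmult p s ((Opi p ^^ j) c) = (Opi p ^^ j) (Osmult p s c)"
  by (induction j) (simp_all add: Osmult_Opi)

lemma Oneg_Oadd: "Oneg p (Oadd p c d) = Oadd p (Oneg p c) (Oneg p d)"
  by (simp add: Oneg_def Oadd_def zneg_zadd)

lemma Otheta_Oadd: "Otheta p (Oadd p c d) = Oadd p (Otheta p c) (Otheta p d)"
  by (simp add: Otheta_def Oadd_def fun_eq_iff zneg_zadd zadd_zzero zadd_4)

lemma Otheta_Oneg: "Otheta p (Oneg p c) = Oneg p (Otheta p c)"
  by (simp add: Otheta_def Oneg_def fun_eq_iff zneg_zadd zadd_zzero)

lemma Oadd_assoc: "Oadd p (Oadd p a b) c = Oadd p a (Oadd p b c)"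
  by (simp add: Oadd_def zadd_assoc)

lemma Oadd_comm: "Oadd p a b = Oadd p b a"
  by (simp add: Oadd_def zadd_comm)

lemma Oadd_4: "Oadd p (Oadd p a b) (Oadd p c d) = Oadd p (Oadd p a c) (Oadd p b d)"
  by (simp add: Oadd_def zadd_4)

lemma Opi_Oadd: "Opi p (Oadd p c d) = Oadd p (Opi p c) (Opi p d)"
  by (simp add: Opi_def Otheta_Oadd Oneg_Oadd Oadd_4)

lemma Opi_pow_Oadd: "(Opi p ^^ j) (Oadd p c d) = Oadd p ((Opi p ^^ j) c) ((Opi p ^^ j) d)"
  by (induction j) (simp_all add: Opi_Oadd)

lemma Otheta_Opi: "Otheta p (Opi p c) = Opi p (Otheta p c)"
  by (simp add: Opi_def Otheta_Oadd Otheta_Oneg)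

lemma Otheta_Opi_pow: "Otheta p ((Opi p ^^ j) c) = (Opi p ^^ j) (Otheta p c)"
  by (induction j) (simp_all add: Otheta_Opi)

lemma Ocar_D: "c \<in> Ocar p \<Longrightarrow> k < p - 1 \<Longrightarrow> c k \<in> Zp p"
  "c \<in> Ocar p \<Longrightarrow> \<not> k < p - 1 \<Longrightarrow> c k = zzero"
  by (auto simp: Ocar_def)

lemma OcarI: "(\<And>k. k < p - 1 \<Longrightarrow> c k \<in> Zp p) \<Longrightarrow> (\<And>k. \<not> k < p - 1 \<Longrightarrow> c k = zzero) \<Longrightarrow> c \<in> Ocar p"
  by (auto simp: Ocar_def)

lemma Ozero_Ocar: "p > 0 \<Longrightarrow> Ozero \<in> Ocar p"
  by (auto simp: Ocar_def Ozero_def zzero_Zp)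

lemma Oadd_Ocar: "p > 0 \<Longrightarrow> c \<in> Ocar p \<Longrightarrow> d \<in> Ocar p \<Longrightarrow> Oadd p c d \<in> Ocar p"
  by (rule OcarI) (auto simp: Oadd_def Ocar_D zadd_Zp zadd_zzero)

lemma Oneg_Ocar: "p > 0 \<Longrightarrow> c \<in> Ocar p \<Longrightarrow> Oneg p c \<in> Ocar p"
  by (rule OcarI) (auto simp: Oneg_def Ocar_D zneg_Zp zadd_zzero)

lemma Osmult_Ocar: "p > 0 \<Longrightarrow> s \<in> Zp p \<Longrightarrow> c \<in> Ocar p \<Longrightarrow> Osmult p s c \<in> Ocar p"
  by (rule OcarI) (auto simp: Osmult_def Ocar_D zmul_Zp zmul_zzero)

lemma Otheta_Ocar: "p > 1 \<Longrightarrow> c \<in> Ocar p \<Longrightarrow> Otheta p c \<in> Ocar p"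
proof (rule OcarI)
  fix k assume k: "k < p - 1" and "p > 1" "c \<in> Ocar p"
  then have "c (p - 2) \<in> Zp p" "k > 0 \<Longrightarrow> c (k - 1) \<in> Zp p" by (auto intro: Ocar_D)
  then show "Otheta p c k \<in> Zp p" using k \<open>p > 1\<close> by (simp add: Otheta_def zneg_Zp zadd_Zp)
qed (auto simp: Otheta_def)

lemma Opi_Ocar: "p > 1 \<Longrightarrow> c \<in> Ocar p \<Longrightarrow> Opi p c \<in> Ocar p"
  by (simp add: Opi_def Oadd_Ocar Otheta_Ocar Oneg_Ocar)

lemma Opi_pow_Ocar: "p > 1 \<Longrightarrow> c \<in> Ocar p \<Longrightarrow> (Opi p ^^ j) c \<in> Ocar p"
  by (induction j) (simp_all add: Opi_Ocar)

lemma Pideal_Ocar: "p > 1 \<Longrightarrow> Pideal p j \<subseteq> Ocar p"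
  unfolding Pideal_def using Opi_pow_Ocar by blast



definition Phi :: "nat \<Rightarrow> int poly" where "Phi p = (\<Sum>k<p. monom 1 k)"
definition vec :: "nat \<Rightarrow> nat \<Rightarrow> cyc \<Rightarrow> int poly" where "vec p n c = (\<Sum>k<p - 1. monom (c k n) k)"
definition rel :: "nat \<Rightarrow> nat \<Rightarrow> int poly \<Rightarrow> int poly \<Rightarrow> bool" where
  "rel p n f g \<longleftrightarrow> (\<exists>q w. f - g = Phi p * q + smult (int p ^ n) w)"

lemma coeff_Phi: "coeff (Phi p) k = (if k < p then 1 else 0)"
  by (simp add: Phi_def coeff_sum)

lemma coeff_vec: "coeff (vec p n c) k = (if k < p - 1 then c k n else 0)"
  by (simp add: vec_def coeff_sum)

lemma degree_Phi: "p > 0 \<Longrightarrow> degree (Phi p) = p - 1"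
proof -
  assume "p > 0"
  have "degree (Phi p) \<le> p - 1" by (rule degree_le) (auto simp: coeff_Phi)
  moreover have "p - 1 \<le> degree (Phi p)" by (rule le_degree) (use \<open>p > 0\<close> in \<open>simp add: coeff_Phi\<close>)
  ultimately show ?thesis by simp
qed

lemma lead_Phi: "p > 0 \<Longrightarrow> lead_coeff (Phi p) = 1"
  by (simp add: degree_Phi coeff_Phi)

lemma Phi_nz: "p > 0 \<Longrightarrow> Phi p \<noteq> 0"
proof -
  assume "p > 0"
  then have "coeff (Phi p) 0 = 1" by (simp add: coeff_Phi)
  then show ?thesis by auto
qed

lemma rel_refl[simp]: "rel p n f f"
  unfolding rel_def by (rule exI[of _ 0], rule exI[of _ 0]) simp

lemma rel_eq: "f = g \<Longrightarrow> rel p n f g" by simp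

lemma rel_sym: "rel p n f g \<Longrightarrow> rel p n g f"
  unfolding rel_def by (metis (no_types, lifting) add_uminus_conv_diff minus_add_distrib minus_diff_eq mult_minus_right smult_minus_right)

lemma rel_trans[trans]: "rel p n f g \<Longrightarrow> rel p n g h \<Longrightarrow> rel p n f h"
proof -
  assume "rel p n f g" "rel p n g h"
  then obtain q w q' w' where "f - g = Phi p * q + smult (int p ^ n) w" "g - h = Phi p * q' + smult (int p ^ n) w'"
    unfolding rel_def by blast
  then have "f - h = Phi p * (q + q') + smult (int p ^ n) (w + w')"
    by (simp add: algebra_simps smult_add_right)
  then show ?thesis unfolding rel_def by blast
qed

lemma rel_add: "rel p n f g \<Longrightarrow> rel p n f' g' \<Longrightarrow> rel p n (f + f') (g + g')"
proof -
  assume "rel p n f g" "rel p n f' g'"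
  then obtain q w q' w' where "f - g = Phi p * q + smult (int p ^ n) w" "f' - g' = Phi p * q' + smult (int p ^ n) w'"
    unfolding rel_def by blast
  then have "(f + f') - (g + g') = Phi p * (q + q') + smult (int p ^ n) (w + w')"
    by (simp add: algebra_simps smult_add_right)
  then show ?thesis unfolding rel_def by blast
qed

lemma rel_neg: "rel p n f g \<Longrightarrow> rel p n (- f) (- g)"
proof -
  assume "rel p n f g"
  then obtain q w where "f - g = Phi p * q + smult (int p ^ n) w"
    unfolding rel_def by blast
  then have "(- f) - (- g) = Phi p * (- q) + smult (int p ^ n) (- w)"
    by (simp add: algebra_simps)
  then show ?thesis unfolding rel_def by blast
qed

lemma rel_diff: "rel p n f g \<Longrightarrow> rel p n f' g' \<Longrightarrow> rel p n (f - f') (g - g')"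
  using rel_add[OF _ rel_neg] by (metis diff_conv_add_uminus)

lemma rel_mult: "rel p n f g \<Longrightarrow> rel p n (h * f) (h * g)"
proof -
  assume "rel p n f g"
  then obtain q w where "f - g = Phi p * q + smult (int p ^ n) w"
    unfolding rel_def by blast
  then have "h * f - h * g = Phi p * (h * q) + smult (int p ^ n) (h * w)"
    by (metis (no_types, lifting) distrib_left mult.left_commute mult_smult_right right_diff_distrib)
  then show ?thesis unfolding rel_def by blast
qed

lemma rel_mult2: "rel p n f g \<Longrightarrow> rel p n f' g' \<Longrightarrow> rel p n (f * f') (g * g')"
  by (metis rel_mult rel_trans mult.commute)

lemma rel_Phi: "rel p n (Phi p * q) 0"
  unfolding rel_def by (rule exI[of _ q], rule exI[of _ 0]) simp

lemma rel_P: "rel p n (smult (int p ^ n) w) 0"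
  unfolding rel_def by (rule exI[of _ 0], rule exI[of _ w]) simp

lemma rel_0_iff: "rel p n f g \<longleftrightarrow> rel p n (f - g) 0"
  by (simp add: rel_def)

lemma rel_dvd: assumes "\<And>k. int p ^ n dvd coeff f k" shows "rel p n f 0"
proof -
  define w where "w = map_poly (\<lambda>a. a div int p ^ n) f"
  have "f = smult (int p ^ n) w"
    by (rule poly_eqI) (use assms in \<open>simp add: w_def coeff_map_poly\<close>)
  then show ?thesis using rel_P by metis
qed

lemma dvd_mod_diff: "(P::int) dvd (x mod P - x)"
  by (metis dvd_minus_mod minus_diff_eq dvd_minus_iff)

lemma dvd_mod_diff2: "(P::int) dvd ((a + b) mod P - a - b)"
  using dvd_mod_diff[of P "a + b"] by (simp add: algebra_simps)

lemma dvd_mod_diff3: "(P::int) dvd ((- a) mod P + a)"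
  using dvd_mod_diff[of P "- a"] by (simp add: algebra_simps)

lemma vec_cong: "(\<And>k. k < p - 1 \<Longrightarrow> c k n = d k n) \<Longrightarrow> vec p n c = vec p n d"
  by (simp add: vec_def)

lemma vec_Ozero: "vec p n Ozero = 0"
  by (simp add: vec_def Ozero_def zzero_def)

lemma vec_Oadd: "rel p n (vec p n (Oadd p c d)) (vec p n c + vec p n d)"
proof -
  have "rel p n (vec p n (Oadd p c d) - (vec p n c + vec p n d)) 0"
    by (rule rel_dvd) (simp add: coeff_vec Oadd_def zadd_def dvd_mod_diff dvd_mod_diff2)
  then show ?thesis using rel_0_iff by blast
qed

lemma vec_Oneg: "rel p n (vec p n (Oneg p c)) (- vec p n c)"
proof -
  have "rel p n (vec p n (Oneg p c) - (- vec p n c)) 0"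
    by (rule rel_dvd) (simp add: coeff_vec Oneg_def zneg_def dvd_mod_diff3)
  then show ?thesis using rel_0_iff by blast
qed

lemma vec_Osmult: "rel p n (vec p n (Osmult p s c)) (smult (s n) (vec p n c))"
proof -
  have "rel p n (vec p n (Osmult p s c) - smult (s n) (vec p n c)) 0"
    by (rule rel_dvd) (simp add: coeff_vec Osmult_def zmul_def dvd_mod_diff)
  then show ?thesis using rel_0_iff by blast
qed

lemma rel_smult_mod: "rel p n (smult (a mod int p ^ n) f) (smult a f)"
proof -
  have "rel p n (smult (a mod int p ^ n) f - smult a f) 0"
    by (rule rel_dvd) (simp add: left_diff_distrib[symmetric] dvd_mod_diff)
  then show ?thesis using rel_0_iff by blast
qed

lemma vec_Osmult_int: "rel p n (vec p n (Osmult p (zofint p a) c)) (smult a (vec p n c))"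
proof -
  have "rel p n (vec p n (Osmult p (zofint p a) c)) (smult (zofint p a n) (vec p n c))"
    by (rule vec_Osmult)
  then show ?thesis using rel_trans rel_smult_mod unfolding zofint_def by blast
qed

definition Xp :: "int poly" where "Xp = monom 1 1"

lemma coeff_Xp_mult: "coeff (Xp * f) k = (if k = 0 then 0 else coeff f (k - 1))"
  by (simp add: Xp_def coeff_monom_mult)

lemma vec_Otheta: assumes "p > 1" shows "rel p n (vec p n (Otheta p c)) (Xp * vec p n c)"
proof -
  let ?e = "vec p n (Otheta p c) - Xp * vec p n c + smult (c (p - 2) n) (Phi p)"
  have "rel p n ?e 0"
  proof (rule rel_dvd)
    fix k
    consider "k = 0" | "0 < k \<and> k < p - 1" | "k = p - 1" | "k > p - 1" by linarith
    then show "int p ^ n dvd coeff ?e k"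
    proof cases
      case 1 then show ?thesis using assms
        by (simp add: coeff_vec coeff_Xp_mult coeff_Phi Otheta_def zneg_def)
           (metis add.commute diff_minus_eq_add dvd_mod_diff)
    next
      case 2
      then have "coeff ?e k = (c (k - 1) n + (- c (p - 2) n) mod int p ^ n) mod int p ^ n - c (k - 1) n + c (p - 2) n"
        using assms by (auto simp add: coeff_vec coeff_Xp_mult coeff_Phi Otheta_def zneg_def zadd_def)
      also have "\<dots> = ((c (k - 1) n + (- c (p - 2) n)) mod int p ^ n) - (c (k - 1) n + (- c (p - 2) n))"
        by (simp add: mod_simps)
      finally show ?thesis by (simp add: dvd_mod_diff)
    next
      case 3 then show ?thesis using assms
        by (auto simp add: coeff_vec coeff_Xp_mult coeff_Phi Otheta_def numeral_2_eq_2)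
    next
      case 4 then show ?thesis using assms
        by (simp add: coeff_vec coeff_Xp_mult coeff_Phi Otheta_def)
    qed
  qed
  then have "rel p n (?e - smult (c (p - 2) n) (Phi p)) (0 - smult (c (p - 2) n) (Phi p))"
    by (rule rel_diff) simp
  moreover have "rel p n (0 - smult (c (p - 2) n) (Phi p)) 0"
    using rel_Phi[of p n "- [:c (p - 2) n:]"] by simp
  ultimately have "rel p n (vec p n (Otheta p c) - Xp * vec p n c) 0"
    using rel_trans by fastforce
  then show ?thesis using rel_0_iff by blast
qed



lemma int_eq_from_dvd: "0 \<le> (a::int) \<Longrightarrow> a < P \<Longrightarrow> 0 \<le> b \<Longrightarrow> b < P \<Longrightarrow> P dvd a - b \<Longrightarrow> a = b"
  by (metis mod_eq_dvd_iff mod_pos_pos_trivial)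

lemma vec_inj:
  assumes p: "p > 1" and c: "c \<in> Ocar p" and d: "d \<in> Ocar p" and r: "rel p n (vec p n c) (vec p n d)"
  shows "c k n = d k n"
proof -
  obtain q w where qw: "vec p n c - vec p n d = Phi p * q + smult (int p ^ n) w"
    using r unfolding rel_def by blast
  obtain q1 r1 where pd: "pseudo_divmod w (Phi p) = (q1, r1)" by (cases "pseudo_divmod w (Phi p)")
  have lc: "coeff (Phi p) (degree (Phi p)) = 1" using lead_Phi p by simp
  have w: "w = Phi p * q1 + r1" using pseudo_divmod(1)[OF Phi_nz pd] p lc by simp
  have r1: "coeff r1 k = 0" if "k \<ge> p - 1" for k
  proof -
    have "r1 = 0 \<or> degree r1 < degree (Phi p)" using pseudo_divmod(2)[OF Phi_nz pd] p by simp
    then show ?thesis using that degree_Phi[of p] p by (auto intro: coeff_eq_0)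
  qed
  define F where "F = q + smult (int p ^ n) q1"
  have eq: "vec p n c - vec p n d - smult (int p ^ n) r1 = Phi p * F"
    unfolding F_def using qw w by (simp add: algebra_simps smult_add_right)
  have F0: "F = 0"
  proof (rule ccontr)
    assume "F \<noteq> 0"
    have "coeff (Phi p * F) (degree (Phi p) + degree F) = coeff (Phi p) (degree (Phi p)) * coeff F (degree F)"
      by (rule coeff_mult_degree_sum)
    also have "\<dots> \<noteq> 0" using lc \<open>F \<noteq> 0\<close> by simp
    finally have "coeff (Phi p * F) (degree (Phi p) + degree F) \<noteq> 0" .
    moreover have "coeff (vec p n c - vec p n d - smult (int p ^ n) r1) (degree (Phi p) + degree F) = 0"
      using r1 degree_Phi[of p] p by (simp add: coeff_vec)
    ultimately show False using eq by simp
  qed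
  show ?thesis
  proof (cases "k < p - 1")
    case True
    have "coeff (vec p n c - vec p n d) k = coeff (smult (int p ^ n) r1) k"
      using eq F0 by simp
    then have "c k n - d k n = int p ^ n * coeff r1 k" using True by (simp add: coeff_vec)
    then have "int p ^ n dvd c k n - d k n" by simp
    moreover have "c k \<in> Zp p" "d k \<in> Zp p" using c d True by (auto intro: Ocar_D)
    ultimately show ?thesis using Zp_D int_eq_from_dvd by metis
  next
    case False
    then show ?thesis using Ocar_D(2)[OF c False] Ocar_D(2)[OF d False] by simp
  qed
qed

lemma Ocar_eqI:
  assumes "p > 1" "c \<in> Ocar p" "d \<in> Ocar p" "\<And>n. rel p n (vec p n c) (vec p n d)"
  shows "c = d"
  using vec_inj[OF assms(1-3) assms(4)] by (auto simp: fun_eq_iff)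

lemma vec_Opi: assumes "p > 1" shows "rel p n (vec p n (Opi p c)) ((Xp - 1) * vec p n c)"
proof -
  have "rel p n (vec p n (Opi p c)) (vec p n (Otheta p c) + vec p n (Oneg p c))"
    unfolding Opi_def by (rule vec_Oadd)
  also have "rel p n \<dots> (Xp * vec p n c + (- vec p n c))"
    by (rule rel_add[OF vec_Otheta[OF assms] vec_Oneg])
  finally show ?thesis by (simp add: algebra_simps)
qed

lemma vec_Opi_pow: assumes "p > 1" shows "rel p n (vec p n ((Opi p ^^ j) c)) ((Xp - 1) ^ j * vec p n c)"
proof (induction j)
  case 0 then show ?case by simp
next
  case (Suc j)
  have "rel p n (vec p n ((Opi p ^^ Suc j) c)) ((Xp - 1) * vec p n ((Opi p ^^ j) c))"
    using vec_Opi[OF assms] by simp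
  also have "rel p n \<dots> ((Xp - 1) * ((Xp - 1) ^ j * vec p n c))"
    by (rule rel_mult[OF Suc])
  finally show ?case by (simp add: algebra_simps)
qed

fun opL :: "nat \<Rightarrow> int list \<Rightarrow> cyc \<Rightarrow> cyc" where
  "opL p [] c = Ozero"
| "opL p (a # as) c = Oadd p (Osmult p (zofint p a) c) (Otheta p (opL p as c))"

definition opP :: "nat \<Rightarrow> int poly \<Rightarrow> cyc \<Rightarrow> cyc" where
  "opP p f c = opL p (coeffs f) c"

lemma opL_Ocar: "p > 1 \<Longrightarrow> c \<in> Ocar p \<Longrightarrow> opL p as c \<in> Ocar p"
  by (induction as) (simp_all add: Ozero_Ocar Oadd_Ocar Osmult_Ocar zofint_Zp Otheta_Ocar)

lemma opP_Ocar: "p > 1 \<Longrightarrow> c \<in> Ocar p \<Longrightarrow> opP p f c \<in> Ocar p"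
  by (simp add: opP_def opL_Ocar)

lemma pCons0_Xp: "pCons 0 f = Xp * f"
  by (rule poly_eqI) (simp add: coeff_Xp_mult coeff_pCons')

lemma vec_opL: assumes "p > 1" shows "rel p n (vec p n (opL p as c)) (Poly as * vec p n c)"
proof (induction as)
  case Nil then show ?case by (simp add: vec_Ozero)
next
  case (Cons a as)
  have "rel p n (vec p n (opL p (a # as) c)) (vec p n (Osmult p (zofint p a) c) + vec p n (Otheta p (opL p as c)))"
    by (simp add: vec_Oadd)
  also have "rel p n \<dots> (smult a (vec p n c) + Xp * vec p n (opL p as c))"
    by (rule rel_add[OF vec_Osmult_int vec_Otheta[OF assms]])
  also have "rel p n \<dots> (smult a (vec p n c) + Xp * (Poly as * vec p n c))"
    by (rule rel_add[OF rel_refl rel_mult[OF Cons]])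
  finally show ?case by (simp add: pCons0_Xp mult.assoc)
qed

lemma vec_opP: "p > 1 \<Longrightarrow> rel p n (vec p n (opP p f c)) (f * vec p n c)"
  using vec_opL[of p n "coeffs f" c] by (simp add: opP_def)



definition ee :: "nat \<Rightarrow> int poly" where
  "ee p = (\<Sum>s<p - 1. smult (int ((p choose (s + 1)) div p)) ((Xp - 1) ^ s))"

lemma Phi_Xp: "Phi p = (\<Sum>k<p. Xp ^ k)"
  by (simp add: Phi_def Xp_def monom_power)

lemma Xp1_nz: "Xp - 1 \<noteq> 0"
proof
  assume "Xp - 1 = 0"
  then have "coeff (Xp - 1) 1 = 0" by simp
  then show False by (simp add: Xp_def)
qed

lemma of_nat_mult_poly: "(of_nat k :: int poly) * f = smult (int k) f"
  by (simp add: of_nat_poly)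

lemma smult_sum_right: "smult a (sum f S) = (\<Sum>x\<in>S. smult a (f x))"
proof -
  have "smult a (sum f S) = [:a:] * sum f S" by simp
  also have "\<dots> = (\<Sum>x\<in>S. [:a:] * f x)" by (rule sum_distrib_left)
  finally show ?thesis by simp
qed

lemma key_id:
  assumes "prime p"
  shows "(Xp - 1) ^ (p - 1) + smult (int p) (ee p) = Phi p"
proof -
  have p1: "p > 1" using assms prime_gt_1_nat by blast
  define Y where "Y = Xp - 1"
  define G where "G = (\<Sum>s<p. of_nat (p choose (s + 1)) * Y ^ s)"
  have "Xp ^ p = (Y + 1) ^ p" by (simp add: Y_def)
  also have "\<dots> = (\<Sum>s\<le>p. of_nat (p choose s) * Y ^ s * 1 ^ (p - s))"
    by (rule binomial_ring)
  also have "\<dots> = (\<Sum>s\<le>p. of_nat (p choose s) * Y ^ s)" by simp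
  also have "\<dots> = 1 + (\<Sum>s\<le>p - 1. of_nat (p choose (Suc s)) * Y ^ Suc s)"
    using sum.atMost_Suc_shift[of "\<lambda>s. of_nat (p choose s) * Y ^ s" "p - 1"] p1 by simp
  also have "(\<Sum>s\<le>p - 1. of_nat (p choose (Suc s)) * Y ^ Suc s) = Y * G"
    unfolding G_def sum_distrib_left
    by (rule sum.cong) (use p1 in \<open>auto simp: ac_simps\<close>)
  finally have "Xp ^ p - 1 = Y * G" by simp
  moreover have "Xp ^ p - 1 = Y * Phi p" unfolding Y_def Phi_Xp by (rule power_diff_1_eq)
  ultimately have "Y * (Phi p - G) = 0" by (simp add: algebra_simps)
  then have PG: "Phi p = G" using Xp1_nz unfolding Y_def by simp
  have "G = (\<Sum>s<p - 1. of_nat (p choose (s + 1)) * Y ^ s) + Y ^ (p - 1)"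
    unfolding G_def using sum.lessThan_Suc[of "\<lambda>s. of_nat (p choose (s + 1)) * Y ^ s" "p - 1"] p1
    by simp
  also have "(\<Sum>s<p - 1. of_nat (p choose (s + 1)) * Y ^ s) = smult (int p) (ee p)"
    unfolding ee_def smult_sum_right Y_def
  proof (rule sum.cong)
    fix s assume "s \<in> {..<p - 1}"
    then have "p dvd (p choose (s + 1))" by (intro dvd_choose_prime) (use assms in auto)
    then have "p choose (s + 1) = p * ((p choose (s + 1)) div p)" by simp
    then have "int (p choose (s + 1)) = int p * int ((p choose (s + 1)) div p)"
      by (metis of_nat_mult)
    then show "of_nat (p choose (s + 1)) * (Xp - 1) ^ s = smult (int p) (smult (int ((p choose (s + 1)) div p)) ((Xp - 1) ^ s))"
      by (simp add: of_nat_mult_poly)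
  qed simp
  finally show ?thesis using PG unfolding Y_def by simp
qed

lemma poly_ee_1: assumes "prime p" shows "poly (ee p) 1 = 1"
proof -
  have p1: "p > 1" using assms prime_gt_1_nat by blast
  have "poly (ee p) 1 = (\<Sum>s<p - 1. int ((p choose (s + 1)) div p) * 0 ^ s)"
    by (simp add: ee_def poly_sum Xp_def poly_monom)
  also have "\<dots> = (\<Sum>s\<in>{0}. int ((p choose (s + 1)) div p) * 0 ^ s)"
    by (rule sum.mono_neutral_right) (use p1 in auto)
  also have "\<dots> = 1" using p1 by simp
  finally show ?thesis .
qed

lemma ee_factor: assumes "prime p" obtains h where "1 - ee p = (Xp - 1) * h"
proof -
  have "poly (1 - ee p) 1 = 0" using poly_ee_1[OF assms] by simp
  then have "[:-1, 1:] dvd (1 - ee p)" using poly_eq_0_iff_dvd by (metis)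
  moreover have "[:-1, 1:] = (Xp - 1 :: int poly)"
    by (rule poly_eqI) (simp add: Xp_def coeff_pCons')
  ultimately show ?thesis using that by (metis dvdE)
qed

lemma pow_ideal:
  assumes "f = Phi p * a + smult (int p) b"
  shows "\<exists>q w. f ^ n = Phi p * q + smult (int p ^ n) w"
proof (induction n)
  case 0 then show ?case by (rule exI[of _ 0], rule exI[of _ 1]) simp
next
  case (Suc n)
  then obtain q w where "f ^ n = Phi p * q + smult (int p ^ n) w" by blast
  then have "f ^ Suc n = Phi p * (a * (Phi p * q + smult (int p ^ n) w) + smult (int p) b * q)
      + smult (int p ^ Suc n) (b * w)"
    using assms by (simp add: algebra_simps smult_add_right)
  then show ?case by blast
qed

lemma rel_smult: "rel p n f g \<Longrightarrow> rel p n (smult a f) (smult a g)"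
  using rel_mult[of p n f g "[:a:]"] by simp

definition rr :: "nat \<Rightarrow> int poly" where "rr p = 1 - ee p"

lemma rr_pow: assumes "prime p" shows "rel p n (rr p ^ ((p - 1) * n)) 0"
proof -
  obtain h where h: "1 - ee p = (Xp - 1) * h" using ee_factor[OF assms] by blast
  have "rr p ^ (p - 1) = (Xp - 1) ^ (p - 1) * h ^ (p - 1)"
    unfolding rr_def h by (simp add: power_mult_distrib)
  also have "\<dots> = Phi p * h ^ (p - 1) + smult (int p) (- ee p * h ^ (p - 1))"
  proof -
    have k: "(Xp - 1) ^ (p - 1) = Phi p - smult (int p) (ee p)"
      using key_id[OF assms] by (simp add: eq_diff_eq)
    show ?thesis unfolding k by (simp add: left_diff_distrib)
  qed
  finally obtain q w where "(rr p ^ (p - 1)) ^ n = Phi p * q + smult (int p ^ n) w"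
    using pow_ideal by blast
  then show ?thesis unfolding rel_def by (auto simp add: power_mult)
qed



definition MM :: "nat \<Rightarrow> nat \<Rightarrow> cyc \<Rightarrow> cyc" where
  "MM p k = Osmult p (zofint p (int p ^ k))"

lemma vec_MM: "rel p n (vec p n (MM p k c)) (smult (int p ^ k) (vec p n c))"
  unfolding MM_def by (rule vec_Osmult_int)

lemma MM_Ocar: "p > 0 \<Longrightarrow> c \<in> Ocar p \<Longrightarrow> MM p k c \<in> Ocar p"
  unfolding MM_def by (simp add: Osmult_Ocar zofint_Zp)

definition Lim :: "(nat \<Rightarrow> cyc) \<Rightarrow> cyc" where "Lim F = (\<lambda>k n. F n k n)"

lemma Lim_Ocar:
  assumes p: "p > 0" and F: "\<And>L. F L \<in> Ocar p" and FS: "\<And>L k. F (Suc L) k L = F L k L"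
  shows "Lim F \<in> Ocar p"
proof (rule OcarI)
  fix k assume k: "k < p - 1"
  have Z: "F n k \<in> Zp p" for n using Ocar_D(1)[OF F k] .
  show "Lim F k \<in> Zp p" unfolding Zp_def Lim_def
  proof (intro CollectI allI conjI)
    fix n
    show "0 \<le> F n k n" "F n k n < int p ^ n" using Zp_D[OF Z] by auto
    show "F (Suc n) k (Suc n) mod int p ^ n = F n k n"
      using Zp_D[OF Z[of "Suc n"], of n] FS by simp
  qed
next
  fix k assume k: "\<not> k < p - 1"
  show "Lim F k = zzero" using Ocar_D(2)[OF F k] by (simp add: Lim_def zzero_def fun_eq_iff)
qed

lemma sum_pow_split: "(\<Sum>k<a + b. (r::int poly) ^ k) = (\<Sum>k<a. r ^ k) + r ^ a * (\<Sum>k<b. r ^ k)"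
  by (induction b) (simp_all add: algebra_simps power_add)

lemma rel_Phi_add: "rel p n (Phi p * q + f) f"
  unfolding rel_def by (rule exI[of _ q], rule exI[of _ 0]) simp

lemma key_id2: "prime p \<Longrightarrow> (Xp - 1) ^ (p - 1) = Phi p - smult (int p) (ee p)"
  using key_id by (simp add: eq_diff_eq)

lemma S_sub:
  assumes "prime p" "c \<in> Ocar p"
  shows "(Opi p ^^ (m + (p - 1))) c = MM p 1 ((Opi p ^^ m) (opP p (- ee p) c))"
proof -
  have p1: "p > 1" using assms prime_gt_1_nat by blast
  show ?thesis
  proof (rule Ocar_eqI[OF p1])
    show "(Opi p ^^ (m + (p - 1))) c \<in> Ocar p" using assms p1 by (simp add: Opi_pow_Ocar)
    show "MM p 1 ((Opi p ^^ m) (opP p (- ee p) c)) \<in> Ocar p"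
      using assms p1 by (simp add: Opi_pow_Ocar MM_Ocar opP_Ocar)
    fix n
    let ?v = "vec p n c"
    have "rel p n (vec p n ((Opi p ^^ (m + (p - 1))) c)) ((Xp - 1) ^ (m + (p - 1)) * ?v)"
      by (rule vec_Opi_pow[OF p1])
    also have "(Xp - 1) ^ (m + (p - 1)) * ?v = Phi p * ((Xp - 1) ^ m * ?v) + smult (int p) ((Xp - 1) ^ m * (- ee p * ?v))"
      unfolding power_add key_id2[OF assms(1)] by (simp add: algebra_simps)
    also have "rel p n \<dots> (smult (int p) ((Xp - 1) ^ m * (- ee p * ?v)))"
      by (rule rel_Phi_add)
    also have "rel p n \<dots> (smult (int p) ((Xp - 1) ^ m * vec p n (opP p (- ee p) c)))"
      by (rule rel_smult, rule rel_mult, rule rel_sym, rule vec_opP[OF p1])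
    also have "rel p n \<dots> (smult (int p) (vec p n ((Opi p ^^ m) (opP p (- ee p) c))))"
      by (rule rel_smult, rule rel_sym, rule vec_Opi_pow[OF p1])
    also have "rel p n \<dots> (vec p n (MM p 1 ((Opi p ^^ m) (opP p (- ee p) c))))"
      using rel_sym[OF vec_MM[of p n 1]] by simp
    finally show "rel p n (vec p n ((Opi p ^^ (m + (p - 1))) c)) (vec p n (MM p 1 ((Opi p ^^ m) (opP p (- ee p) c))))" .
  qed
qed

definition gg :: "nat \<Rightarrow> nat \<Rightarrow> int poly" where "gg p K = (\<Sum>k<K. rr p ^ k)"

lemma ee_gg: "ee p * gg p K = 1 - rr p ^ K"
proof -
  have "1 - rr p ^ K = (1 - rr p) * gg p K" unfolding gg_def by (rule one_diff_power_eq)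
  then show ?thesis by (simp add: rr_def)
qed

lemma S_sup:
  assumes pr: "prime p" and d: "d \<in> Ocar p"
  shows "\<exists>c\<in>Ocar p. (Opi p ^^ (m + (p - 1))) c = MM p 1 ((Opi p ^^ m) d)"
proof -
  have p1: "p > 1" using assms prime_gt_1_nat by blast
  define F where "F L = opP p (- gg p ((p - 1) * L)) d" for L
  have FO: "F L \<in> Ocar p" for L unfolding F_def using p1 d by (simp add: opP_Ocar)
  have FS: "F (Suc L) k L = F L k L" for L k
  proof (rule vec_inj[OF p1 FO FO])
    let ?v = "vec p L d"
    have "rel p L (gg p ((p - 1) * L + (p - 1)) - gg p ((p - 1) * L)) 0"
    proof -
      have "gg p ((p - 1) * L + (p - 1)) - gg p ((p - 1) * L) = rr p ^ ((p - 1) * L) * gg p (p - 1)"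
        unfolding gg_def by (simp add: sum_pow_split)
      moreover have "rel p L (gg p (p - 1) * rr p ^ ((p - 1) * L)) (gg p (p - 1) * 0)"
        by (rule rel_mult, rule rr_pow[OF pr])
      ultimately show ?thesis by (simp add: mult.commute)
    qed
    then have "rel p L (gg p ((p - 1) * L + (p - 1))) (gg p ((p - 1) * L))"
      using rel_0_iff by blast
    moreover have "(p - 1) * Suc L = (p - 1) * L + (p - 1)" by simp
    ultimately have g: "rel p L (gg p ((p - 1) * Suc L)) (gg p ((p - 1) * L))"
      by (metis)
    have "rel p L (vec p L (F (Suc L))) (- gg p ((p - 1) * Suc L) * ?v)"
      unfolding F_def by (rule vec_opP[OF p1])
    also have "rel p L \<dots> (- gg p ((p - 1) * L) * ?v)"
      using rel_mult[OF rel_neg[OF g], of ?v] by (simp add: mult.commute)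
    also have "rel p L \<dots> (vec p L (F L))"
      unfolding F_def by (rule rel_sym, rule vec_opP[OF p1])
    finally show "rel p L (vec p L (F (Suc L))) (vec p L (F L))" .
  qed
  define c where "c = Lim F"
  have cO: "c \<in> Ocar p" unfolding c_def using Lim_Ocar[OF _ FO FS] p1 by simp
  have cF: "vec p n c = vec p n (F n)" for n
    by (rule vec_cong) (simp add: c_def Lim_def)
  have "(Opi p ^^ (m + (p - 1))) c = MM p 1 ((Opi p ^^ m) d)"
  proof (rule Ocar_eqI[OF p1])
    show "(Opi p ^^ (m + (p - 1))) c \<in> Ocar p" using cO p1 by (simp add: Opi_pow_Ocar)
    show "MM p 1 ((Opi p ^^ m) d) \<in> Ocar p"
      using d p1 by (simp add: Opi_pow_Ocar MM_Ocar)
    fix n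
    let ?v = "vec p n d"
    let ?G = "gg p ((p - 1) * n)"
    have "rel p n (vec p n ((Opi p ^^ (m + (p - 1))) c)) ((Xp - 1) ^ (m + (p - 1)) * vec p n c)"
      by (rule vec_Opi_pow[OF p1])
    also have "rel p n \<dots> ((Xp - 1) ^ (m + (p - 1)) * (- ?G * ?v))"
      unfolding cF F_def by (rule rel_mult, rule vec_opP[OF p1])
    also have "(Xp - 1) ^ (m + (p - 1)) * (- ?G * ?v) = Phi p * (- ((Xp - 1) ^ m * ?G * ?v)) + smult (int p) ((Xp - 1) ^ m * (ee p * ?G) * ?v)"
      unfolding power_add key_id2[OF pr] by (simp add: algebra_simps)
    also have "rel p n \<dots> (smult (int p) ((Xp - 1) ^ m * (ee p * ?G) * ?v))"
      by (rule rel_Phi_add)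
    also have "rel p n \<dots> (smult (int p) ((Xp - 1) ^ m * 1 * ?v))"
    proof -
      have "rel p n (1 - rr p ^ ((p - 1) * n)) (1 - 0)"
        by (rule rel_diff[OF rel_refl rr_pow[OF pr]])
      then have "rel p n ((Xp - 1) ^ m * (ee p * ?G)) ((Xp - 1) ^ m * 1)"
        unfolding ee_gg by (intro rel_mult) simp
      then have "rel p n (?v * ((Xp - 1) ^ m * (ee p * ?G))) (?v * ((Xp - 1) ^ m * 1))"
        by (rule rel_mult)
      then show ?thesis by (intro rel_smult) (simp add: mult.commute)
    qed
    also have "rel p n \<dots> (smult (int p) (vec p n ((Opi p ^^ m) d)))"
      by (simp, rule rel_smult, rule rel_sym, rule vec_Opi_pow[OF p1])
    also have "rel p n \<dots> (vec p n (MM p 1 ((Opi p ^^ m) d)))"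
      using rel_sym[OF vec_MM[of p n 1]] by simp
    finally show "rel p n (vec p n ((Opi p ^^ (m + (p - 1))) c)) (vec p n (MM p 1 ((Opi p ^^ m) d)))" .
  qed
  then show ?thesis using cO by blast
qed

lemma Pideal_step:
  assumes "prime p"
  shows "Pideal p (m + (p - 1)) = MM p 1 ` Pideal p m"
proof
  have p1: "p > 1" using assms prime_gt_1_nat by blast
  show "Pideal p (m + (p - 1)) \<subseteq> MM p 1 ` Pideal p m"
  proof
    fix x assume "x \<in> Pideal p (m + (p - 1))"
    then obtain c where c: "c \<in> Ocar p" "x = (Opi p ^^ (m + (p - 1))) c" unfolding Pideal_def by blast
    have "opP p (- ee p) c \<in> Ocar p" using c p1 by (simp add: opP_Ocar)
    then show "x \<in> MM p 1 ` Pideal p m"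
      unfolding c(2) S_sub[OF assms c(1)] Pideal_def by blast
  qed
  show "MM p 1 ` Pideal p m \<subseteq> Pideal p (m + (p - 1))"
  proof
    fix y assume "y \<in> MM p 1 ` Pideal p m"
    then obtain d where d: "d \<in> Ocar p" "y = MM p 1 ((Opi p ^^ m) d)" unfolding Pideal_def by blast
    then show "y \<in> Pideal p (m + (p - 1))"
      using S_sup[OF assms d(1), of m] unfolding Pideal_def by (metis image_eqI)
  qed
qed



lemma MM_0: assumes "p > 1" "c \<in> Ocar p" shows "MM p 0 c = c"
proof (rule Ocar_eqI[OF assms(1)])
  show "MM p 0 c \<in> Ocar p" using assms by (simp add: MM_Ocar)
  fix n show "rel p n (vec p n (MM p 0 c)) (vec p n c)" using vec_MM[of p n 0 c] by simp
qed (use assms in simp)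

lemma MM_add: "MM p a (MM p b c) = MM p (a + b) c"
  by (simp add: MM_def Osmult_Osmult zofint_mult power_add)

lemma MM_comm: "MM p a (MM p b c) = MM p b (MM p a c)"
  by (simp add: MM_add add.commute)

lemma MM_Oadd: "MM p a (Oadd p c d) = Oadd p (MM p a c) (MM p a d)"
  by (simp add: MM_def Osmult_Oadd)

lemma MM_Osmult: "MM p a (Osmult p s c) = Osmult p s (MM p a c)"
  by (simp add: MM_def Osmult_comm)

lemma MM_Otheta: "MM p a (Otheta p c) = Otheta p (MM p a c)"
  by (simp add: MM_def Osmult_Otheta)

lemma MM_Ozero: "MM p a Ozero = Ozero"
  by (simp add: MM_def Osmult_Ozero)

lemma MM_inj:
  assumes p: "p > 1" and c: "c \<in> Ocar p" and d: "d \<in> Ocar p" and eq: "MM p a c = MM p a d"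
  shows "c = d"
proof -
  have "c k n = d k n" for k n
  proof (cases "k < p - 1")
    case True
    have Zc: "c k \<in> Zp p" and Zd: "d k \<in> Zp p" using c d True by (auto intro: Ocar_D)
    define P where "P = int p ^ (n + a)"
    define x where "x = c k (n + a)"
    define y where "y = d k (n + a)"
    have "(int p ^ a mod P * x) mod P = (int p ^ a mod P * y) mod P"
      using fun_cong[OF fun_cong[OF eq, of k], of "n + a"]
      by (simp add: MM_def Osmult_def zmul_def zofint_def P_def x_def y_def)
    then have "(int p ^ a * x) mod P = (int p ^ a * y) mod P"
      by (simp add: mod_mult_left_eq)
    then have "P dvd int p ^ a * x - int p ^ a * y" by (simp add: mod_eq_dvd_iff)
    then have h: "int p ^ a * int p ^ n dvd int p ^ a * (x - y)"
      by (metis P_def power_add mult.commute right_diff_distrib)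
    have nz: "int p ^ a \<noteq> 0" using p by simp
    have "int p ^ n dvd x - y" using h nz by (metis dvd_mult_cancel_left)
    then have "x mod int p ^ n = y mod int p ^ n" by (simp add: mod_eq_dvd_iff)
    then show ?thesis using Zp_mod_le[OF Zc, of n "n + a"] Zp_mod_le[OF Zd, of n "n + a"]
      by (simp add: x_def y_def)
  next
    case False
    then show ?thesis using Ocar_D(2)[OF c False] Ocar_D(2)[OF d False] by simp
  qed
  then show ?thesis by (simp add: fun_eq_iff)
qed

lemma inj_MM: "p > 1 \<Longrightarrow> inj_on (MM p a) (Ocar p)"
  using MM_inj by (meson inj_onI)

lemma foldr_MM:
  "MM p a (foldr (\<lambda>(s, x) acc. Oadd p (Osmult p s x) acc) xs Ozero)
   = foldr (\<lambda>(s, x) acc. Oadd p (Osmult p s x) acc) (map (\<lambda>(s, x). (s, MM p a x)) xs) Ozero"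
  by (induction xs) (auto simp: MM_Ozero MM_Oadd MM_Osmult)

lemma lift_list:
  assumes "set (map snd ys) \<subseteq> f ` S"
  shows "\<exists>xs. ys = map (\<lambda>(s, x). (s, f x)) xs \<and> map fst xs = map fst ys \<and> set (map snd xs) \<subseteq> S"
  using assms
proof (induction ys)
  case Nil then show ?case by simp
next
  case (Cons y ys)
  then obtain xs where xs: "ys = map (\<lambda>(s, x). (s, f x)) xs" "map fst xs = map fst ys" "set (map snd xs) \<subseteq> S"
    by auto
  obtain u where u: "u \<in> S" "snd y = f u" using Cons.prems by auto
  show ?case
    by (rule exI[of _ "(fst y, u) # xs"]) (use xs u in \<open>auto simp: prod_eq_iff\<close>)
qed

lemma Ospan_MM: "MM p a ` Ospan p S = Ospan p (MM p a ` S)"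
proof
  show "MM p a ` Ospan p S \<subseteq> Ospan p (MM p a ` S)"
  proof
    fix z assume "z \<in> MM p a ` Ospan p S"
    then obtain xs where xs: "set (map fst xs) \<subseteq> Zp p" "set (map snd xs) \<subseteq> S"
      "z = MM p a (foldr (\<lambda>(s, x) acc. Oadd p (Osmult p s x) acc) xs Ozero)"
      unfolding Ospan_def by blast
    let ?ys = "map (\<lambda>(s, x). (s, MM p a x)) xs"
    have "set (map fst ?ys) \<subseteq> Zp p" using xs(1) by auto
    moreover have "set (map snd ?ys) \<subseteq> MM p a ` S" using xs(2) by auto
    moreover have "z = foldr (\<lambda>(s, x) acc. Oadd p (Osmult p s x) acc) ?ys Ozero"
      using xs(3) foldr_MM by simp
    ultimately show "z \<in> Ospan p (MM p a ` S)" unfolding Ospan_def by blast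
  qed
  show "Ospan p (MM p a ` S) \<subseteq> MM p a ` Ospan p S"
  proof
    fix z assume "z \<in> Ospan p (MM p a ` S)"
    then obtain ys where ys: "set (map fst ys) \<subseteq> Zp p" "set (map snd ys) \<subseteq> MM p a ` S"
      "z = foldr (\<lambda>(s, x) acc. Oadd p (Osmult p s x) acc) ys Ozero"
      unfolding Ospan_def by blast
    obtain xs where xs: "ys = map (\<lambda>(s, x). (s, MM p a x)) xs" "map fst xs = map fst ys" "set (map snd xs) \<subseteq> S"
      using lift_list[OF ys(2)] by blast
    have "z = MM p a (foldr (\<lambda>(s, x) acc. Oadd p (Osmult p s x) acc) xs Ozero)"
      using ys(3) xs(1) foldr_MM by simp
    moreover have "set (map fst xs) \<subseteq> Zp p" using xs(2) ys(1) by simp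
    ultimately show "z \<in> MM p a ` Ospan p S" using xs(3) unfolding Ospan_def by blast
  qed
qed

lemma foldr_Ocar:
  assumes "p > 0" "set (map fst xs) \<subseteq> Zp p" "set (map snd xs) \<subseteq> Ocar p"
  shows "foldr (\<lambda>(s, x) acc. Oadd p (Osmult p s x) acc) xs Ozero \<in> Ocar p"
  using assms(2,3)
  by (induction xs) (auto simp: Ozero_Ocar[OF assms(1)] Oadd_Ocar[OF assms(1)] Osmult_Ocar[OF assms(1)])

lemma Ospan_Ocar: "p > 0 \<Longrightarrow> S \<subseteq> Ocar p \<Longrightarrow> Ospan p S \<subseteq> Ocar p"
  unfolding Ospan_def using foldr_Ocar by blast

lemma Pideal_Oadd: "p > 1 \<Longrightarrow> x \<in> Pideal p j \<Longrightarrow> y \<in> Pideal p j \<Longrightarrow> Oadd p x y \<in> Pideal p j"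
  unfolding Pideal_def by (auto simp: Opi_pow_Oadd[symmetric] Oadd_Ocar)

lemma Pideal_Osmult: "p > 1 \<Longrightarrow> s \<in> Zp p \<Longrightarrow> x \<in> Pideal p j \<Longrightarrow> Osmult p s x \<in> Pideal p j"
  unfolding Pideal_def by (auto simp: Osmult_Opi_pow Osmult_Ocar)

lemma Pideal_Otheta: "p > 1 \<Longrightarrow> x \<in> Pideal p j \<Longrightarrow> Otheta p x \<in> Pideal p j"
  unfolding Pideal_def by (auto simp: Otheta_Opi_pow Otheta_Ocar)

lemma Pideal_MM: "p > 1 \<Longrightarrow> x \<in> Pideal p j \<Longrightarrow> MM p a x \<in> Pideal p j"
  unfolding MM_def by (rule Pideal_Osmult) (auto simp: zofint_Zp)

lemma Pideal_iter:
  assumes "prime p"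
  shows "Pideal p (m + q * (p - 1)) = MM p q ` Pideal p m"
proof (induction q)
  have p1: "p > 1" using assms prime_gt_1_nat by blast
  case 0
  have "MM p 0 ` Pideal p m = Pideal p m"
    using MM_0[OF p1] Pideal_Ocar[OF p1] by (force simp: image_iff)
  then show ?case by simp
next
  case (Suc q)
  have e: "m + Suc q * (p - 1) = (m + q * (p - 1)) + (p - 1)" by simp
  have "Pideal p (m + Suc q * (p - 1)) = Pideal p ((m + q * (p - 1)) + (p - 1))"
    unfolding e by (rule refl)
  also have "\<dots> = MM p 1 ` Pideal p (m + q * (p - 1))" by (rule Pideal_step[OF assms])
  also have "\<dots> = MM p 1 ` MM p q ` Pideal p m" using Suc by simp
  also have "\<dots> = MM p (Suc q) ` Pideal p m" by (simp add: image_image MM_add)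
  finally show ?case .
qed



lemma transfer:
  assumes pr: "prime p" and g: "\<gamma> \<in> Hhat p i"
    and rel1: "MM p a ` Pideal p j = MM p b ` Pideal p i"
    and rel2: "MM p (2 * a) ` Pideal p (2 * j + 1) = MM p (2 * b) ` Pideal p (2 * i + 1)"
  shows "\<exists>\<delta>\<in>Hhat p j. \<forall>x\<in>Pideal p j. \<forall>y\<in>Pideal p j. \<forall>k::nat.
           MM p k x \<in> Pideal p i \<longrightarrow> MM p k y \<in> Pideal p i \<longrightarrow>
           MM p (2 * k) (\<delta> x y) = \<gamma> (MM p k x) (MM p k y)"
proof -
  have p1: "p > 1" using pr prime_gt_1_nat by blast
  have p0: "p > 0" using p1 by simp
  note PO = Pideal_Ocar[OF p1]
  from g have
    g1: "\<And>x y. x \<in> Pideal p i \<Longrightarrow> y \<in> Pideal p i \<Longrightarrow> \<gamma> x y \<in> Pideal p (2 * i + 1)" and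
    g2a: "\<And>x x' y. x \<in> Pideal p i \<Longrightarrow> x' \<in> Pideal p i \<Longrightarrow> y \<in> Pideal p i \<Longrightarrow>
        \<gamma> (Oadd p x x') y = Oadd p (\<gamma> x y) (\<gamma> x' y)" and
    g2b: "\<And>x x' y. x \<in> Pideal p i \<Longrightarrow> x' \<in> Pideal p i \<Longrightarrow> y \<in> Pideal p i \<Longrightarrow>
        \<gamma> y (Oadd p x x') = Oadd p (\<gamma> y x) (\<gamma> y x')" and
    g3a: "\<And>s x y. s \<in> Zp p \<Longrightarrow> x \<in> Pideal p i \<Longrightarrow> y \<in> Pideal p i \<Longrightarrow>
        \<gamma> (Osmult p s x) y = Osmult p s (\<gamma> x y)" and
    g3b: "\<And>s x y. s \<in> Zp p \<Longrightarrow> x \<in> Pideal p i \<Longrightarrow> y \<in> Pideal p i \<Longrightarrow>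
        \<gamma> y (Osmult p s x) = Osmult p s (\<gamma> y x)" and
    g4: "\<And>x. x \<in> Pideal p i \<Longrightarrow> \<gamma> x x = Ozero" and
    g5: "\<And>x y. x \<in> Pideal p i \<Longrightarrow> y \<in> Pideal p i \<Longrightarrow> \<gamma> (Otheta p x) (Otheta p y) = Otheta p (\<gamma> x y)" and
    g6: "Ospan p ((\<lambda>(x, y). \<gamma> x y) ` (Pideal p i \<times> Pideal p i)) = Pideal p (2 * i + 1)"
    unfolding Hhat_def by auto
  have gMM: "\<gamma> (MM p k u) (MM p k v) = MM p (2 * k) (\<gamma> u v)"
    if "u \<in> Pideal p i" "v \<in> Pideal p i" for k u v
  proof -
    have s: "zofint p (int p ^ k) \<in> Zp p" using p0 by (simp add: zofint_Zp)
    have "\<gamma> (MM p k u) (MM p k v) = MM p k (\<gamma> u (MM p k v))"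
      unfolding MM_def using g3a[OF s] that Pideal_MM[OF p1] MM_def by metis
    also have "\<gamma> u (MM p k v) = MM p k (\<gamma> u v)"
      unfolding MM_def using g3b[OF s] that by metis
    finally show ?thesis by (simp add: MM_add mult_2)
  qed
  define E where "E x = (THE u. u \<in> Ocar p \<and> MM p b u = MM p a x)" for x
  have E: "E x \<in> Pideal p i \<and> MM p b (E x) = MM p a x" if x: "x \<in> Pideal p j" for x
  proof -
    obtain u where u: "u \<in> Pideal p i" "MM p a x = MM p b u" using rel1 x by blast
    have uO: "u \<in> Ocar p" using PO u by blast
    have "E x = u" unfolding E_def
      by (rule the_equality) (use u uO MM_inj[OF p1] in metis)+
    then show ?thesis using u by simp
  qed
  have Eu: "E x = u" if "x \<in> Pideal p j" "u \<in> Ocar p" "MM p b u = MM p a x" for x u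
    using E[OF that(1)] that PO MM_inj[OF p1] by (metis subsetD)
  define \<delta> where "\<delta> x y = (THE z. z \<in> Ocar p \<and> MM p (2 * a) z = MM p (2 * b) (\<gamma> (E x) (E y)))" for x y
  have D: "\<delta> x y \<in> Pideal p (2 * j + 1) \<and> MM p (2 * a) (\<delta> x y) = MM p (2 * b) (\<gamma> (E x) (E y))"
    if "x \<in> Pideal p j" "y \<in> Pideal p j" for x y
  proof -
    have "\<gamma> (E x) (E y) \<in> Pideal p (2 * i + 1)" using g1 E that by blast
    then obtain z where z: "z \<in> Pideal p (2 * j + 1)" "MM p (2 * a) z = MM p (2 * b) (\<gamma> (E x) (E y))"
      using rel2 by (metis (no_types, lifting) image_iff imageI)
    have zO: "z \<in> Ocar p" using PO z by blast
    have "\<delta> x y = z" unfolding \<delta>_def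
      by (rule the_equality) (use z zO MM_inj[OF p1] in metis)+
    then show ?thesis using z by simp
  qed
  have Du: "\<delta> x y = z" if "x \<in> Pideal p j" "y \<in> Pideal p j" "z \<in> Ocar p"
    "MM p (2 * a) z = MM p (2 * b) (\<gamma> (E x) (E y))" for x y z
    using D[OF that(1,2)] that PO MM_inj[OF p1] by (metis subsetD)
  have DO: "\<delta> x y \<in> Ocar p" if "x \<in> Pideal p j" "y \<in> Pideal p j" for x y
    using D[OF that] PO by blast
  have EO: "E x \<in> Ocar p" if "x \<in> Pideal p j" for x using E[OF that] PO by blast
  have Hj: "\<delta> \<in> Hhat p j"
    unfolding Hhat_def
  proof (intro CollectI conjI ballI)
    fix x y assume "x \<in> Pideal p j" "y \<in> Pideal p j"
    then show "\<delta> x y \<in> Pideal p (2 * j + 1)" using D by blast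
  next
    fix x x' y assume xs: "x \<in> Pideal p j" "x' \<in> Pideal p j" "y \<in> Pideal p j"
    have xx: "Oadd p x x' \<in> Pideal p j" using xs Pideal_Oadd[OF p1] by blast
    have EA: "E (Oadd p x x') = Oadd p (E x) (E x')"
      by (rule Eu[OF xx]) (use xs E EO p0 in \<open>simp_all add: Oadd_Ocar MM_Oadd\<close>)
    show "\<delta> (Oadd p x x') y = Oadd p (\<delta> x y) (\<delta> x' y)"
      by (rule Du[OF xx xs(3)]) (use xs D DO EA E g2a p0 in \<open>simp_all add: Oadd_Ocar MM_Oadd\<close>)
    show "\<delta> y (Oadd p x x') = Oadd p (\<delta> y x) (\<delta> y x')"
      by (rule Du[OF xs(3) xx]) (use xs D DO EA E g2b p0 in \<open>simp_all add: Oadd_Ocar MM_Oadd\<close>)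
  next
    fix s x y assume s: "s \<in> Zp p" and xs: "x \<in> Pideal p j" "y \<in> Pideal p j"
    have sx: "Osmult p s x \<in> Pideal p j" using xs s Pideal_Osmult[OF p1] by blast
    have ES: "E (Osmult p s x) = Osmult p s (E x)"
      by (rule Eu[OF sx]) (use xs E EO p0 s in \<open>simp_all add: Osmult_Ocar MM_Osmult\<close>)
    show "\<delta> (Osmult p s x) y = Osmult p s (\<delta> x y)"
      by (rule Du[OF sx xs(2)]) (use xs D DO ES E g3a p0 s in \<open>simp_all add: Osmult_Ocar MM_Osmult\<close>)
    show "\<delta> y (Osmult p s x) = Osmult p s (\<delta> y x)"
      by (rule Du[OF xs(2) sx]) (use xs D DO ES E g3b p0 s in \<open>simp_all add: Osmult_Ocar MM_Osmult\<close>)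
  next
    fix x assume x: "x \<in> Pideal p j"
    show "\<delta> x x = Ozero"
      by (rule Du[OF x x]) (use x E g4 p0 in \<open>simp_all add: Ozero_Ocar MM_Ozero\<close>)
  next
    fix x y assume xs: "x \<in> Pideal p j" "y \<in> Pideal p j"
    have tx: "Otheta p x \<in> Pideal p j" "Otheta p y \<in> Pideal p j" using xs Pideal_Otheta[OF p1] by blast+
    have ET: "E (Otheta p x) = Otheta p (E x)" "E (Otheta p y) = Otheta p (E y)"
      by (rule Eu[OF tx(1)], use xs E EO p1 in \<open>simp_all add: Otheta_Ocar MM_Otheta\<close>)
         (rule Eu[OF tx(2)], use xs E EO p1 in \<open>simp_all add: Otheta_Ocar MM_Otheta\<close>)
    show "\<delta> (Otheta p x) (Otheta p y) = Otheta p (\<delta> x y)"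
      by (rule Du[OF tx]) (use xs D DO ET E g5 p1 in \<open>simp_all add: Otheta_Ocar MM_Otheta\<close>)
  next
    let ?D = "(\<lambda>(x, y). \<delta> x y) ` (Pideal p j \<times> Pideal p j)"
    let ?G = "(\<lambda>(x, y). \<gamma> x y) ` (Pideal p i \<times> Pideal p i)"
    have DG: "MM p (2 * a) ` ?D = MM p (2 * b) ` ?G"
    proof
      show "MM p (2 * a) ` ?D \<subseteq> MM p (2 * b) ` ?G"
        using D E by fastforce
      show "MM p (2 * b) ` ?G \<subseteq> MM p (2 * a) ` ?D"
      proof
        fix w assume "w \<in> MM p (2 * b) ` ?G"
        then obtain u v where uv: "u \<in> Pideal p i" "v \<in> Pideal p i" "w = MM p (2 * b) (\<gamma> u v)" by auto
        obtain x where x: "x \<in> Pideal p j" "MM p a x = MM p b u" using rel1 uv(1) by (metis image_iff imageI)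
        obtain y where y: "y \<in> Pideal p j" "MM p a y = MM p b v" using rel1 uv(2) by (metis image_iff imageI)
        have uO: "u \<in> Ocar p" "v \<in> Ocar p" using PO uv by blast+
        have "E x = u" using Eu[OF x(1) uO(1)] x(2) by simp
        moreover have "E y = v" using Eu[OF y(1) uO(2)] y(2) by simp
        ultimately have "w = MM p (2 * a) (\<delta> x y)" using D[OF x(1) y(1)] uv by simp
        then show "w \<in> MM p (2 * a) ` ?D" using x y by force
      qed
    qed
    have DsO: "?D \<subseteq> Ocar p" using DO by auto
    have GsO: "?G \<subseteq> Ocar p" using g1 PO by auto
    have "MM p (2 * a) ` Ospan p ?D = MM p (2 * a) ` Pideal p (2 * j + 1)"
    proof -
      have "MM p (2 * a) ` Ospan p ?D = Ospan p (MM p (2 * a) ` ?D)" by (rule Ospan_MM)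
      also have "\<dots> = Ospan p (MM p (2 * b) ` ?G)" using DG by simp
      also have "\<dots> = MM p (2 * b) ` Ospan p ?G" by (rule Ospan_MM[symmetric])
      also have "\<dots> = MM p (2 * b) ` Pideal p (2 * i + 1)" using g6 by simp
      finally show ?thesis using rel2 by simp
    qed
    then show "Ospan p ?D = Pideal p (2 * j + 1)"
      using inj_on_image_eq_iff[OF inj_MM[OF p1] Ospan_Ocar[OF p0 DsO] PO] by blast
  qed
  have main: "MM p (2 * k) (\<delta> x y) = \<gamma> (MM p k x) (MM p k y)"
    if xs: "x \<in> Pideal p j" "y \<in> Pideal p j" and k: "MM p k x \<in> Pideal p i" "MM p k y \<in> Pideal p i" for x y k
  proof (rule MM_inj[OF p1, of _ _ "2 * a"])
    show "MM p (2 * k) (\<delta> x y) \<in> Ocar p" using DO[OF xs] p0 by (simp add: MM_Ocar)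
    show "\<gamma> (MM p k x) (MM p k y) \<in> Ocar p" using g1[OF k] PO by blast
    have Ek: "MM p k (E x) \<in> Pideal p i" "MM p k (E y) \<in> Pideal p i" using E xs Pideal_MM[OF p1] by blast+
    have "MM p (2 * a) (MM p (2 * k) (\<delta> x y)) = MM p (2 * k) (MM p (2 * b) (\<gamma> (E x) (E y)))"
      using D[OF xs] by (simp add: MM_comm[of p "2 * a"])
    also have "\<dots> = MM p (2 * b) (MM p (2 * k) (\<gamma> (E x) (E y)))" by (rule MM_comm)
    also have "\<dots> = MM p (2 * b) (\<gamma> (MM p k (E x)) (MM p k (E y)))"
      using gMM E xs by simp
    also have "\<dots> = \<gamma> (MM p b (MM p k (E x))) (MM p b (MM p k (E y)))"
      using gMM[OF Ek] by simp
    also have "\<dots> = \<gamma> (MM p a (MM p k x)) (MM p a (MM p k y))"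
      using E xs by (simp add: MM_comm[of p b k] MM_comm[of p a k])
    also have "\<dots> = MM p (2 * a) (\<gamma> (MM p k x) (MM p k y))"
      using gMM[OF k] by simp
    finally show "MM p (2 * a) (MM p (2 * k) (\<delta> x y)) = MM p (2 * a) (\<gamma> (MM p k x) (MM p k y))" .
  qed
  show ?thesis using Hj main by blast
qed

lemma MM0_image: "p > 1 \<Longrightarrow> MM p 0 ` Pideal p m = Pideal p m"
  using MM_0 Pideal_Ocar by (force simp: image_iff)

theorem lemma2p2:
  fixes p i j :: nat and \<gamma> :: "cyc \<Rightarrow> cyc \<Rightarrow> cyc"
  assumes "prime p" and "odd p"
    and "\<gamma> \<in> Hhat p i"
    and "[j = i] (mod (p - 1))"
  shows "\<exists>\<delta>\<in>Hhat p j. \<forall>x\<in>Pideal p j. \<forall>y\<in>Pideal p j. \<forall>k::nat.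
           Osmult p (zofint p (int p ^ k)) x \<in> Pideal p i \<longrightarrow>
           Osmult p (zofint p (int p ^ k)) y \<in> Pideal p i \<longrightarrow>
           Osmult p (zofint p (int p ^ (2 * k))) (\<delta> x y)
             = \<gamma> (Osmult p (zofint p (int p ^ k)) x) (Osmult p (zofint p (int p ^ k)) y)"
proof -
  have p1: "p > 1" using assms prime_gt_1_nat by blast
  have "\<exists>\<delta>\<in>Hhat p j. \<forall>x\<in>Pideal p j. \<forall>y\<in>Pideal p j. \<forall>k::nat.
           MM p k x \<in> Pideal p i \<longrightarrow> MM p k y \<in> Pideal p i \<longrightarrow>
           MM p (2 * k) (\<delta> x y) = \<gamma> (MM p k x) (MM p k y)"
  proof (cases "i \<le> j")
    case True
    then obtain q where q: "j = q * (p - 1) + i" using assms(4) cong_le_nat by blast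
    have "Pideal p j = MM p q ` Pideal p i"
      using Pideal_iter[OF assms(1), of i q] q by (simp add: add.commute)
    then have r1: "MM p 0 ` Pideal p j = MM p q ` Pideal p i"
      using MM0_image[OF p1, of j] by simp
    have e: "2 * j + 1 = (2 * i + 1) + (2 * q) * (p - 1)" using q by simp
    have "Pideal p (2 * j + 1) = MM p (2 * q) ` Pideal p (2 * i + 1)"
      using Pideal_iter[OF assms(1), of "2 * i + 1" "2 * q"] e by simp
    then have r2: "MM p (2 * 0) ` Pideal p (2 * j + 1) = MM p (2 * q) ` Pideal p (2 * i + 1)"
      using MM0_image[OF p1, of "2 * j + 1"] by simp
    show ?thesis by (rule transfer[OF assms(1,3) r1 r2])
  next
    case False
    have "[i = j] (mod (p - 1))" using assms(4) by (simp add: cong_sym)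
    then obtain q where q: "i = q * (p - 1) + j" using False cong_le_nat by (metis nat_le_linear)
    have "Pideal p i = MM p q ` Pideal p j"
      using Pideal_iter[OF assms(1), of j q] q by (simp add: add.commute)
    then have r1: "MM p q ` Pideal p j = MM p 0 ` Pideal p i"
      using MM0_image[OF p1, of i] by simp
    have e: "2 * i + 1 = (2 * j + 1) + (2 * q) * (p - 1)" using q by simp
    have "Pideal p (2 * i + 1) = MM p (2 * q) ` Pideal p (2 * j + 1)"
      using Pideal_iter[OF assms(1), of "2 * j + 1" "2 * q"] e by simp
    then have r2: "MM p (2 * q) ` Pideal p (2 * j + 1) = MM p (2 * 0) ` Pideal p (2 * i + 1)"
      using MM0_image[OF p1, of "2 * i + 1"] by simp
    show ?thesis by (rule transfer[OF assms(1,3) r1 r2])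
  qed
  then show ?thesis unfolding MM_def .
qed

end
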